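(* For every $\epsilon>0$ there exists $\delta>0$ such that, for $k<e^{\delta n}$ (where $n$ is the number of variables), no deterministic online width-cut-$k$ algorithm can achieve an asymptotic approximation ratio of $5/6+\epsilon$ for unweighted max-2-sat with input model 3.
   Context: Unweighted max-2-sat: the input is a CNF formula whose clauses have at most two literals, each of weight 1; the goal is an assignment maximizing the number of satisfied clauses. Online: variables arrive one at a time in adversarial order and each must be irrevocably assigned upon arrival. In input model 3, the data item of a variable contains the complete description of every clause in which it occurs (names, weights, lengths, and all the other variables in those clauses together with their signs), separated into clauses where it appears positively and negatively. Width-cut-$k$ model: the algorithm maintains a tree of partial assignments with the empty assignment as root at level 0; when the $i$-th variable is processed each node at level $i-1$ may get any number of children (including zero), each extending it by a value for that variable; at most $k$ nodes exist at each level; at the end the best complete assignment is output. The asymptotic approximation ratio of $\mathbb{A}$ is $\liminf_{n}\inf_{I\in\mathcal{I}_n} v(\mathbb{A},I)/v(I)$. *)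

theory Defs
  imports Complex_Main "HOL-Library.Extended_Real" "HOL-Library.Liminf_Limsup"
begin

type_synonym var = nat
type_synonym literal = "var \<times> bool"   \<comment> \<open>(variable, sign); True = positive\<close>
type_synonym clause = "nat \<times> literal set"  \<comment> \<open>(clause name, literals); every weight is 1\<close>
type_synonym mi2sat = "var list \<times> clause set"
  \<comment> \<open>(arrival order of the variables, clauses)\<close>

definition order :: "mi2sat \<Rightarrow> var list" where "order I = fst I"
definition clauses :: "mi2sat \<Rightarrow> clause set" where "clauses I = snd I"
definition nvars :: "mi2sat \<Rightarrow> nat" where "nvars I = length (order I)"

definition valid_clause :: "clause \<Rightarrow> bool" where
  "valid_clause c \<longleftrightarrow> finite (snd c) \<and> snd c \<noteq> {} \<and> card (snd c) \<le> 2 \<and> inj_on fst (snd c)"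

definition valid_instance :: "mi2sat \<Rightarrow> bool" where
  "valid_instance I \<longleftrightarrow> distinct (order I) \<and> finite (clauses I)
     \<and> inj_on fst (clauses I)
     \<and> (\<forall>c\<in>clauses I. valid_clause c \<and> fst ` snd c \<subseteq> set (order I))"

text \<open>Input model 3 data item of variable x: its name together with the full description
  of all clauses in which it occurs positively, resp. negatively.\<close>
type_synonym data_item = "var \<times> clause set \<times> clause set"

definition item :: "mi2sat \<Rightarrow> var \<Rightarrow> data_item" where
  "item I x = (x, {c\<in>clauses I. (x, True) \<in> snd c}, {c\<in>clauses I. (x, False) \<in> snd c})"

text \<open>A deterministic online algorithm in the width-cut model: given the number of
  variables n and the data items seen so far, it returns the set of nodes (partial
  assignments, as lists of values in arrival order) at the current level of the tree.\<close>
type_synonym algorithm = "nat \<Rightarrow> data_item list \<Rightarrow> bool list set"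

definition level :: "algorithm \<Rightarrow> mi2sat \<Rightarrow> nat \<Rightarrow> bool list set" where
  "level A I i = (if i = 0 then {[]}
      else A (nvars I) (map (item I) (take i (order I))))"

definition width_cut :: "(nat \<Rightarrow> nat) \<Rightarrow> algorithm \<Rightarrow> bool" where
  "width_cut k A \<longleftrightarrow> (\<forall>I. valid_instance I \<longrightarrow> (\<forall>i\<in>{1..nvars I}.
      level A I i \<subseteq> {p @ [b] | p b. p \<in> level A I (i - 1)}
      \<and> card (level A I i) \<le> k (nvars I)))"

definition sat :: "(var \<Rightarrow> bool) \<Rightarrow> clause \<Rightarrow> bool" where
  "sat a c \<longleftrightarrow> (\<exists>(x, s)\<in>snd c. a x = s)"

definition num_sat :: "(var \<Rightarrow> bool) \<Rightarrow> mi2sat \<Rightarrow> nat" where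
  "num_sat a I = card {c\<in>clauses I. sat a c}"

definition opt :: "mi2sat \<Rightarrow> nat" where
  "opt I = Max ((\<lambda>a. num_sat a I) ` UNIV)"

definition leaf_assignment :: "mi2sat \<Rightarrow> bool list \<Rightarrow> var \<Rightarrow> bool" where
  "leaf_assignment I p x = (case map_of (zip (order I) p) x of Some b \<Rightarrow> b | None \<Rightarrow> False)"

text \<open>Value of the algorithm: best complete assignment among the leaves (0 if none).\<close>
definition alg_value :: "algorithm \<Rightarrow> mi2sat \<Rightarrow> nat" where
  "alg_value A I = Max (insert 0 ((\<lambda>p. num_sat (leaf_assignment I p) I) ` level A I (nvars I)))"

definition ratio :: "algorithm \<Rightarrow> mi2sat \<Rightarrow> real" where
  "ratio A I = (if opt I = 0 then 1 else real (alg_value A I) / real (opt I))"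

definition instances :: "nat \<Rightarrow> mi2sat set" where
  "instances n = {I. valid_instance I \<and> nvars I = n}"

definition asymptotic_ratio :: "algorithm \<Rightarrow> ereal" where
  "asymptotic_ratio A = liminf (\<lambda>n. INF I\<in>instances n. ereal (ratio A I))"

end

theory Submission
  imports Defs
begin

definition agr :: "(nat \<Rightarrow> bool) \<Rightarrow> bool list \<Rightarrow> nat" where
  "agr g s = (\<Sum>i<length s. if g i = s!i then 1 else 0)"

lemma agr_Cons: "agr g (b#t) = (if g 0 = b then 1 else 0) + agr (g \<circ> Suc) t"
  unfolding agr_def length_Cons sum.lessThan_Suc_shift by simp

lemma lists_Suc: "{s::bool list. length s = Suc m} = (\<lambda>(b,t). b#t) ` (UNIV \<times> {t. length t = m})"
  by (auto simp: length_Suc_conv)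

lemma sum_pow_agr: "(\<Sum>s\<in>{s. length s = m}. (x::real) ^ agr g s) = (1+x)^m"
proof (induction m arbitrary: g)
  case 0
  then show ?case by (simp add: agr_def)
next
  case (Suc m)
  have inj: "inj_on (\<lambda>(b,t). b#t) (UNIV \<times> {t::bool list. length t = m})"
    by (auto simp: inj_on_def)
  have "(\<Sum>s\<in>{s. length s = Suc m}. x ^ agr g s)
      = (\<Sum>p\<in>UNIV \<times> {t. length t = m}. x ^ agr g (fst p # snd p))"
    unfolding lists_Suc by (subst sum.reindex[OF inj]) (auto intro!: sum.cong)
  also have "\<dots> = (\<Sum>b\<in>UNIV. \<Sum>t\<in>{t. length t = m}. x ^ agr g (b # t))"
    by (simp add: sum.cartesian_product split_beta)
  also have "\<dots> = (\<Sum>b\<in>UNIV. x ^ (if g 0 = b then 1 else 0) * (1+x)^m)"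
    by (simp add: agr_Cons power_add sum_distrib_left[symmetric] Suc.IH)
  also have "\<dots> = (1+x)^Suc m"
    by (simp add: UNIV_bool algebra_simps)
  finally show ?case .
qed

lemma level_struct:
  assumes wc: "width_cut k A" and v: "valid_instance I"
  shows "j \<le> nvars I \<Longrightarrow> p \<in> level A I j \<Longrightarrow> length p = j \<and> (\<forall>i\<le>j. take i p \<in> level A I i)"
proof (induction j arbitrary: p)
  case 0
  then show ?case by (simp add: level_def)
next
  case (Suc j)
  have "Suc j \<in> {1..nvars I}" using Suc.prems(1) by simp
  from wc[unfolded width_cut_def, rule_format, OF v this]
  have "level A I (Suc j) \<subseteq> {q @ [b] | q b. q \<in> level A I (Suc j - 1)}" by blast
  with Suc.prems(2) obtain q b where p: "p = q @ [b]" and q: "q \<in> level A I j" by auto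
  from Suc.IH[OF _ q] Suc.prems(1) have IH: "length q = j" "\<forall>i\<le>j. take i q \<in> level A I i" by auto
  show ?case
  proof (intro conjI allI impI)
    show "length p = Suc j" using p IH by simp
    fix i assume "i \<le> Suc j"
    then consider "i = Suc j" | "i \<le> j" by linarith
    then show "take i p \<in> level A I i"
    proof cases
      case 1 then show ?thesis using p IH Suc.prems(2) by simp
    next
      case 2 then show ?thesis using p IH by simp
    qed
  qed
qed

definition cl :: "nat \<Rightarrow> bool list \<Rightarrow> nat \<Rightarrow> clause" where
  "cl m s j = (j, (if j mod 3 = 0 then {(j div 3, True), (m + j div 3, True)}
     else if j mod 3 = 1 then {(j div 3, False), (2*m + j div 3, True)}
     else if s ! (j div 3) then {(m + j div 3, False)} else {(2*m + j div 3, False)}))"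

definition inst :: "nat \<Rightarrow> bool list \<Rightarrow> mi2sat" where
  "inst m s = ([0..<3*m], cl m s ` {..<3*m})"

lemma inst_simps: "order (inst m s) = [0..<3*m]" "clauses (inst m s) = cl m s ` {..<3*m}"
  "nvars (inst m s) = 3*m"
  by (simp_all add: inst_def order_def clauses_def nvars_def)

lemma fst_cl[simp]: "fst (cl m s j) = j" by (simp add: cl_def)

lemma inj_cl: "inj_on (cl m s) A"
  by (metis fst_cl inj_on_def)

lemma valid_inst: assumes "m \<ge> 1" shows "valid_instance (inst m s)"
proof -
  have "valid_clause (cl m s j) \<and> fst ` snd (cl m s j) \<subseteq> {0..<3*m}" if "j < 3*m" for j
  proof -
    have "j div 3 < m" using that by auto
    then show ?thesis using assms
      by (auto simp: cl_def valid_clause_def card_insert_if)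
  qed
  moreover have "inj_on fst (cl m s ` {..<3*m})"
    by (auto simp: inj_on_def)
  ultimately show ?thesis
    unfolding valid_instance_def inst_simps by auto
qed

lemma cl_indep: assumes "x < m" "(x,b) \<in> snd (cl m s j)" shows "cl m s j = cl m s' j"
  using assms by (auto simp: cl_def split: if_splits)

lemma item_indep: assumes "x < m" shows "item (inst m s) x = item (inst m s') x"
proof -
  have "{c \<in> cl m s ` {..<3*m}. (x,b) \<in> snd c} = {c \<in> cl m s' ` {..<3*m}. (x,b) \<in> snd c}" for b
  proof -
    have *: "{c \<in> cl m s1 ` {..<3*m}. (x,b) \<in> snd c} \<subseteq> {c \<in> cl m s2 ` {..<3*m}. (x,b) \<in> snd c}"
      for s1 s2
    proof
      fix c assume "c \<in> {c \<in> cl m s1 ` {..<3*m}. (x,b) \<in> snd c}"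
      then obtain j where j: "j < 3*m" "c = cl m s1 j" "(x,b) \<in> snd c" by auto
      then have "c = cl m s2 j" using cl_indep[OF assms] by metis
      with j have "c \<in> cl m s2 ` {..<3*m}" by (metis image_eqI lessThan_iff)
      with j show "c \<in> {c \<in> cl m s2 ` {..<3*m}. (x,b) \<in> snd c}" by auto
    qed
    show ?thesis using *[of s s'] *[of s' s] by blast
  qed
  then show ?thesis unfolding item_def inst_simps by simp
qed

lemma level_m_indep: "level A (inst m s) m = level A (inst m s') m"
proof -
  have eq: "map (item (inst m s)) [0..<m] = map (item (inst m s')) [0..<m]"
    using item_indep by (intro map_cong) auto
  have t: "take m [0..<3*m] = [0..<m]" by (simp add: take_upt)
  show ?thesis unfolding level_def inst_simps t eq by simp
qed

lemma num_sat_inst: "num_sat a (inst m s) = (\<Sum>j<3*m. if sat a (cl m s j) then 1 else 0)"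
proof -
  have "{c \<in> cl m s ` {..<3*m}. sat a c} = cl m s ` {j\<in>{..<3*m}. sat a (cl m s j)}" by auto
  then have "num_sat a (inst m s) = card {j\<in>{..<3*m}. sat a (cl m s j)}"
    unfolding num_sat_def inst_simps using card_image[OF inj_cl] by simp
  also have "\<dots> = (\<Sum>j<3*m. if sat a (cl m s j) then 1 else 0)"
    by (simp add: sum.inter_filter[symmetric])
  finally show ?thesis .
qed

lemma sum3: "(\<Sum>j<3*(m::nat). (f::nat\<Rightarrow>nat) j) = (\<Sum>i<m. f (3*i) + f (3*i+1) + f (3*i+2))"
proof (induction m)
  case 0 then show ?case by simp
next
  case (Suc m)
  have e: "3*Suc m = Suc(Suc(Suc(3*m)))" by simp
  show ?case unfolding e sum.lessThan_Suc Suc.IH by (simp add: add.assoc)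
qed

lemma gadget_le: assumes "i < m"
  shows "(if sat a (cl m s (3*i)) then 1 else 0) + (if sat a (cl m s (3*i+1)) then 1 else 0)
     + (if sat a (cl m s (3*i+2)) then 1 else 0) \<le> (2::nat) + (if a i = s!i then 1 else 0)"
proof -
  have d: "(3*i) div 3 = i" "(3*i+1) div 3 = i" "(3*i+2) div 3 = i"
    "(3*i) mod 3 = 0" "(3*i+1) mod 3 = 1" "(3*i+2) mod 3 = 2" by presburger+
  show ?thesis unfolding cl_def d using assms by (auto simp: sat_def)
qed

lemma num_sat_le: assumes "length s = m"
  shows "num_sat a (inst m s) \<le> 2*m + agr a s"
proof -
  have "num_sat a (inst m s) \<le> (\<Sum>i<m. (2::nat) + (if a i = s!i then 1 else 0))"
    unfolding num_sat_inst sum3 by (intro sum_mono gadget_le) simp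
  also have "\<dots> = 2*m + agr a s" using assms by (subst sum.distrib) (simp add: agr_def)
  finally show ?thesis .
qed

lemma num_sat_le3: "num_sat a (inst m s) \<le> 3*m"
proof -
  have "num_sat a (inst m s) \<le> (\<Sum>j<3*m. (1::nat))"
    unfolding num_sat_inst by (intro sum_mono) simp
  then show ?thesis by simp
qed

definition aopt :: "nat \<Rightarrow> bool list \<Rightarrow> nat \<Rightarrow> bool" where
  "aopt m s x = (if x < m then s!x else if x < 2*m then \<not> s!(x-m) else s!(x-2*m))"

lemma num_sat_aopt: "num_sat (aopt m s) (inst m s) = 3*m"
proof -
  have "sat (aopt m s) (cl m s j)" if "j < 3*m" for j
  proof -
    have "j div 3 < m" using that by auto
    then show ?thesis by (auto simp: cl_def sat_def aopt_def)
  qed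
  then have "num_sat (aopt m s) (inst m s) = (\<Sum>j<3*m. (1::nat))"
    unfolding num_sat_inst by (intro sum.cong) auto
  then show ?thesis by simp
qed

lemma opt_inst: "opt (inst m s) = 3*m"
  unfolding opt_def
proof (rule Max_eqI)
  show "finite (range (\<lambda>a. num_sat a (inst m s)))"
    by (rule finite_subset[of _ "{..3*m}"]) (auto simp: num_sat_le3)
  show "y \<le> 3*m" if "y \<in> range (\<lambda>a. num_sat a (inst m s))" for y
    using that num_sat_le3 by auto
  show "3*m \<in> range (\<lambda>a. num_sat a (inst m s))"
    using num_sat_aopt by (metis rangeI)
qed

lemma leaf_inst: assumes "length p = 3*m" "x < 3*m"
  shows "leaf_assignment (inst m s) p x = p!x"
proof -
  have "map_of (zip [0..<3*m] p) ([0..<3*m]!x) = Some (p!x)"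
    by (rule map_of_zip_nth) (use assms in auto)
  then show ?thesis using assms unfolding leaf_assignment_def inst_simps by simp
qed

lemma finite_len: "finite {p::bool list. length p = n}"
  using finite_lists_length_eq[of "UNIV::bool set" n] by simp

lemma ratio_bound:
  assumes wc: "width_cut k A" and m: "m \<ge> 1" and ls: "length s = m" and th: "\<theta> \<ge> 0"
    and good: "\<forall>q\<in>level A (inst m s) m. real (agr (\<lambda>i. q!i) s) < \<theta> * real m"
  shows "ratio A (inst m s) \<le> (2+\<theta>)/3"
proof -
  define I where "I = inst m s"
  have v: "valid_instance I" using valid_inst[OF m] I_def by simp
  have nv: "nvars I = 3*m" using I_def inst_simps by simp
  have each: "real (num_sat (leaf_assignment I p) I) \<le> (2+\<theta>) * real m"
    if p: "p \<in> level A I (3*m)" for p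
  proof -
    from level_struct[OF wc v, of "3*m" p] p nv
    have lp: "length p = 3*m" and tk: "take m p \<in> level A I m" by auto
    have "agr (leaf_assignment I p) s = agr (\<lambda>i. take m p ! i) s"
      unfolding agr_def using ls lp I_def leaf_inst by (intro sum.cong) auto
    moreover have "num_sat (leaf_assignment I p) I \<le> 2*m + agr (leaf_assignment I p) s"
      unfolding I_def by (rule num_sat_le[OF ls])
    moreover have "real (agr (\<lambda>i. take m p ! i) s) < \<theta> * real m"
      using good tk I_def by auto
    ultimately show ?thesis by (simp add: algebra_simps)
  qed
  have fin: "finite (level A I (3*m))"
    by (rule finite_subset[OF _ finite_len[of "3*m"]]) (use level_struct[OF wc v] nv in auto)
  define S where "S = insert 0 ((\<lambda>p. num_sat (leaf_assignment I p) I) ` level A I (nvars I))"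
  have "Max S \<in> S" unfolding S_def by (rule Max_in) (use fin nv in auto)
  then have "real (Max S) \<le> (2+\<theta>) * real m"
    unfolding S_def using each nv th by auto
  then have al: "real (alg_value A I) \<le> (2+\<theta>) * real m"
    unfolding alg_value_def S_def .
  have "opt I = 3*m" using opt_inst I_def by simp
  then have "ratio A I = real (alg_value A I) / (3 * real m)"
    unfolding ratio_def using m by simp
  also have "\<dots> \<le> (2+\<theta>) * real m / (3 * real m)"
    using al m by (intro divide_right_mono) auto
  also have "\<dots> = (2+\<theta>)/3" using m by simp
  finally show ?thesis unfolding I_def .
qed

lemma count_bad: assumes x: "x > 1"
  shows "real (card {s. length s = m \<and> \<theta>*real m \<le> real (agr g s)}) * (x powr \<theta>)^m \<le> (1+x)^m"
proof -
  define B where "B = {s. length s = m \<and> \<theta>*real m \<le> real (agr g s)}"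
  have finB: "finite B" by (rule finite_subset[OF _ finite_len[of m]]) (auto simp: B_def)
  have pw: "(x powr \<theta>)^m = x powr (\<theta> * real m)"
    using x by (simp add: powr_realpow[symmetric] powr_powr)
  have "real (card B) * (x powr \<theta>)^m = (\<Sum>s\<in>B. x powr (\<theta> * real m))"
    by (simp add: pw)
  also have "\<dots> \<le> (\<Sum>s\<in>B. x ^ agr g s)"
  proof (rule sum_mono)
    fix s assume "s \<in> B"
    then have "x powr (\<theta> * real m) \<le> x powr real (agr g s)"
      using x by (intro powr_mono) (auto simp: B_def)
    then show "x powr (\<theta> * real m) \<le> x ^ agr g s" using x by (simp add: powr_realpow)
  qed
  also have "\<dots> \<le> (\<Sum>s\<in>{s. length s = m}. x ^ agr g s)"
    by (rule sum_mono2[OF finite_len]) (use x in \<open>auto simp: B_def\<close>)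
  also have "\<dots> = (1+x)^m" by (rule sum_pow_agr)
  finally show ?thesis unfolding B_def .
qed

lemma card_len: "card {s::bool list. length s = m} = 2^m"
  using card_lists_length_eq[of "UNIV::bool set" m] by simp

lemma exists_good:
  assumes L: "finite L" and x: "x > 1"
    and lt: "real (card L) * ((1+x)^m / (x powr \<theta>)^m) < 2^m"
  shows "\<exists>s. length s = m \<and> (\<forall>q\<in>L. real (agr (\<lambda>i. q!i) s) < \<theta>*real m)"
proof (rule ccontr)
  assume nt: "\<not> ?thesis"
  define Bad where "Bad q = {s. length s = m \<and> \<theta>*real m \<le> real (agr (\<lambda>i. q!i) s)}" for q :: "bool list"
  have sub: "{s::bool list. length s = m} \<subseteq> (\<Union>q\<in>L. Bad q)"
    using nt by (auto simp: Bad_def not_less)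
  have fB: "finite (Bad q)" for q by (rule finite_subset[OF _ finite_len[of m]]) (auto simp: Bad_def)
  have pos: "(x powr \<theta>)^m > 0" using x by simp
  have cb: "real (card (Bad q)) \<le> (1+x)^m / (x powr \<theta>)^m" for q
    using count_bad[OF x, where \<theta>=\<theta> and m=m and g="\<lambda>i. q!i"] pos unfolding Bad_def by (simp add: field_simps)
  have "(2::real)^m = real (card {s::bool list. length s = m})" by (simp add: card_len)
  also have "\<dots> \<le> real (card (\<Union>q\<in>L. Bad q))"
    using sub by (intro of_nat_mono card_mono) (use L fB in auto)
  also have "\<dots> \<le> real (\<Sum>q\<in>L. card (Bad q))"
    by (intro of_nat_mono card_UN_le L)
  also have "\<dots> = (\<Sum>q\<in>L. real (card (Bad q)))" by simp
  also have "\<dots> \<le> (\<Sum>q\<in>L. (1+x)^m / (x powr \<theta>)^m)" by (intro sum_mono cb)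
  also have "\<dots> = real (card L) * ((1+x)^m / (x powr \<theta>)^m)" by simp
  finally show False using lt by simp
qed

lemma per_m:
  assumes wc: "width_cut k A" and m: "m \<ge> 1" and x: "x > 1" and th: "\<theta> \<ge> 0"
    and kb: "real (k (3*m)) * ((1+x) / x powr \<theta>)^m < 2^m"
  shows "(INF I\<in>instances (3*m). ereal (ratio A I)) \<le> ereal ((2+\<theta>)/3)"
proof -
  define s0 where "s0 = replicate m False"
  define L where "L = level A (inst m s0) m"
  have v: "valid_instance (inst m s0)" by (rule valid_inst[OF m])
  have nv: "nvars (inst m s0) = 3*m" by (simp add: inst_simps)
  have finL: "finite L"
    by (rule finite_subset[OF _ finite_len[of m]]) (use level_struct[OF wc v, of m] nv L_def in auto)
  have "m \<in> {1..nvars (inst m s0)}" using m nv by simp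
  from wc[unfolded width_cut_def, rule_format, OF v this]
  have cL: "card L \<le> k (3*m)" using nv L_def by simp
  have R: "((1+x) / x powr \<theta>)^m = (1+x)^m / (x powr \<theta>)^m" by (simp add: power_divide)
  have "real (card L) * ((1+x)^m / (x powr \<theta>)^m) \<le> real (k (3*m)) * ((1+x)^m / (x powr \<theta>)^m)"
    using cL x by (intro mult_right_mono) auto
  with kb R have lt: "real (card L) * ((1+x)^m / (x powr \<theta>)^m) < 2^m" by simp
  obtain s where ls: "length s = m" and good: "\<forall>q\<in>L. real (agr (\<lambda>i. q!i) s) < \<theta>*real m"
    using exists_good[OF finL x lt] by blast
  have "L = level A (inst m s) m" unfolding L_def by (rule level_m_indep)
  with good have "ratio A (inst m s) \<le> (2+\<theta>)/3"
    using ratio_bound[OF wc m ls th] by simp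
  moreover have "inst m s \<in> instances (3*m)"
    using valid_inst[OF m] by (simp add: instances_def inst_simps)
  ultimately show ?thesis
    by (meson INF_lower2 ereal_less_eq(3))
qed

lemma choose_x:
  assumes e: "\<epsilon> > 0"
  shows "\<exists>x::real. x > 1 \<and> 1 + x < 2 * x powr (1/2 + \<epsilon>)"
proof -
  define \<theta> where "\<theta> = 1/2 + \<epsilon>"
  define f where "f t = ln (1+t) - \<theta> * ln t" for t :: real
  have "(f has_real_derivative (1/(1+1) - \<theta> * (1/1))) (at 1)"
    unfolding f_def by (auto intro!: derivative_eq_intros)
  then have D: "(f has_real_derivative (-\<epsilon>)) (at 1)" by (simp add: \<theta>_def)
  obtain d where d: "d > 0" "\<forall>h>0. h < d \<longrightarrow> f (1 + h) < f 1"
    using DERIV_neg_dec_right[OF D] e by auto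
  define x where "x = 1 + d/2"
  have x1: "x > 1" using d by (simp add: x_def)
  have "f x < f 1" using d unfolding x_def by auto
  then have "ln (1+x) < ln 2 + \<theta> * ln x" by (simp add: f_def)
  also have "\<dots> = ln (2 * x powr \<theta>)" using x1 by (simp add: ln_mult ln_powr)
  finally have "1 + x < 2 * x powr \<theta>" using x1 by simp
  then show ?thesis using x1 \<theta>_def by auto
qed

theorem theorem4:
  shows "\<forall>\<epsilon>::real. \<epsilon> > 0 \<longrightarrow> (\<exists>\<delta>::real. \<delta> > 0 \<and>
    (\<forall>(k::nat \<Rightarrow> nat) (A::algorithm).
       (\<forall>\<^sub>F n in sequentially. real (k n) < exp (\<delta> * real n)) \<longrightarrow> width_cut k A \<longrightarrow>
       asymptotic_ratio A < ereal (5/6 + \<epsilon>)))"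
proof (intro allI impI)
  fix \<epsilon> :: real assume e: "\<epsilon> > 0"
  define \<theta> where "\<theta> = 1/2 + \<epsilon>"
  obtain x where x1: "x > 1" and xl: "1 + x < 2 * x powr \<theta>"
    using choose_x[OF e] \<theta>_def by auto
  define R where "R = (1+x) / x powr \<theta>"
  have xp: "x powr \<theta> > 0" using x1 by simp
  have R0: "R > 0" using x1 xp by (simp add: R_def)
  have R2: "R < 2" using xl xp by (simp add: R_def divide_simps)
  define \<delta> where "\<delta> = ln (2/R) / 3"
  have gt: "2/R > 1" using R0 R2 by (simp add: field_simps)
  have d0: "\<delta> > 0" unfolding \<delta>_def using ln_gt_zero[OF gt] by simp
  show "\<exists>\<delta>::real. \<delta> > 0 \<and>
    (\<forall>(k::nat \<Rightarrow> nat) (A::algorithm).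
       (\<forall>\<^sub>F n in sequentially. real (k n) < exp (\<delta> * real n)) \<longrightarrow> width_cut k A \<longrightarrow>
       asymptotic_ratio A < ereal (5/6 + \<epsilon>))"
  proof (intro exI[of _ \<delta>] conjI allI impI d0)
    fix k :: "nat \<Rightarrow> nat" and A :: algorithm
    assume ev: "\<forall>\<^sub>F n in sequentially. real (k n) < exp (\<delta> * real n)" and wc: "width_cut k A"
    obtain N where N: "\<And>n. n \<ge> N \<Longrightarrow> real (k n) < exp (\<delta> * real n)"
      using ev unfolding eventually_sequentially by blast
    define u where "u n = (INF I\<in>instances n. ereal (ratio A I))" for n
    have evm: "\<forall>\<^sub>F m in sequentially. (u \<circ> (\<lambda>m. 3*m)) m \<le> ereal ((2+\<theta>)/3)"
      unfolding eventually_sequentially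
    proof (intro exI[of _ "max 1 N"] allI impI)
      fix m assume "m \<ge> max 1 N"
      then have m: "m \<ge> 1" and mN: "3*m \<ge> N" by auto
      have "exp (\<delta> * real (3*m)) = exp (real m * ln (2/R))" by (simp add: \<delta>_def)
      also have "\<dots> = (2/R)^m" using R0 by (simp add: exp_of_nat_mult)
      finally have "real (k (3*m)) < (2/R)^m" using N[OF mN] by simp
      then have "real (k (3*m)) * R^m < (2/R)^m * R^m"
        using R0 by (intro mult_strict_right_mono) auto
      also have "\<dots> = 2^m" using R0 by (simp add: power_divide)
      finally have kb: "real (k (3*m)) * ((1+x) / x powr \<theta>)^m < 2^m" by (simp add: R_def)
      show "(u \<circ> (\<lambda>m. 3*m)) m \<le> ereal ((2+\<theta>)/3)"
        using per_m[OF wc m x1 _ kb] e unfolding u_def \<theta>_def by simp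
    qed
    have sm: "strict_mono (\<lambda>m::nat. 3*m)" by (rule strict_monoI) simp
    have "asymptotic_ratio A = liminf u" unfolding asymptotic_ratio_def u_def ..
    also have "\<dots> \<le> liminf (u \<circ> (\<lambda>m. 3*m))" by (rule liminf_subseq_mono[OF sm])
    also have "\<dots> \<le> ereal ((2+\<theta>)/3)" by (rule Liminf_le[OF _ evm]) simp
    also have "\<dots> < ereal (5/6 + \<epsilon>)" using e by (simp add: \<theta>_def)
    finally show "asymptotic_ratio A < ereal (5/6 + \<epsilon>)" .
  qed
qed

end
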